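(* Let $g\geqslant0$. With respect to the lexicographic monomial order with $\alpha>\gamma$, the set \[\{\zeta'_g,\ \gamma\zeta'_{g-2},\ \gamma^2\zeta'_{g-4},\ \ldots,\ \gamma^{\lfloor g/2\rfloor}\zeta'_{g-2\lfloor g/2\rfloor},\ \gamma^{\lceil g/2\rceil}\}\] is a Gröbner basis for $J'_g$. Consequently, a vector space basis of $\mathbb{C}[\alpha,\gamma]/J'_g$ is represented by the monomials $\alpha^a\gamma^c$ with $0\leqslant c<g/2$ and $0\leqslant a<g-2c$ when $g$ is even, and by the monomials $\alpha^a\gamma^c$ with $0\leqslant c\leqslant(g-1)/2$ and $0\leqslant a<g-2c$ when $g$ is odd.
   Context: Define $\zeta'_k\in\mathbb{C}[\alpha,\gamma]$ by $\zeta'_k=0$ for $k<0$, $\zeta'_0=1$, and $\zeta'_{k+1}=\alpha\zeta'_k+2k(k-1)\gamma\zeta'_{k-2}$ for $k\geqslant0$; let $J'_k=(\zeta'_k,\zeta'_{k+1},\zeta'_{k+2})$. *)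

theory Defs
  imports "HOL-Computational_Algebra.Polynomial"
begin

text \<open>The bivariate polynomial ring C[alpha,gamma] is represented as
  complex poly poly: the outer variable is alpha, the coefficients are
  polynomials in gamma.\<close>

type_synonym bipoly = "complex poly poly"

definition var_alpha :: bipoly where "var_alpha = [:0, 1:]"
definition var_gamma :: bipoly where "var_gamma = [:[:0, 1:]:]"

definition bmonom :: "complex \<Rightarrow> nat \<Rightarrow> nat \<Rightarrow> bipoly" where
  "bmonom u a c = monom (monom u c) a"

text \<open>zeta'_k: zeta'_0 = 1, zeta'_{k+1} = alpha zeta'_k + 2k(k-1) gamma zeta'_{k-2},
  with zeta'_k = 0 for k < 0 (the extra term vanishes for k = 0, 1 anyway).\<close>
fun zeta' :: "nat \<Rightarrow> bipoly" where
  "zeta' 0 = 1"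
| "zeta' (Suc 0) = var_alpha * zeta' 0"
| "zeta' (Suc (Suc 0)) = var_alpha * zeta' (Suc 0)"
| "zeta' (Suc (Suc (Suc n))) = var_alpha * zeta' (Suc (Suc n))
      + of_nat (2 * (n + 2) * (n + 1)) * var_gamma * zeta' n"

definition gen_ideal :: "bipoly set \<Rightarrow> bipoly set" where
  "gen_ideal S = {p. \<exists>F r. finite F \<and> F \<subseteq> S \<and> p = (\<Sum>f\<in>F. r f * f)}"

definition J' :: "nat \<Rightarrow> bipoly set" where
  "J' k = gen_ideal {zeta' k, zeta' (k + 1), zeta' (k + 2)}"

text \<open>Leading monomial (exponent of alpha, exponent of gamma) w.r.t. lex order with
  alpha > gamma: maximal alpha-degree first, then maximal gamma-degree.\<close>
definition lead_mon :: "bipoly \<Rightarrow> nat \<times> nat" where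
  "lead_mon p = (degree p, degree (lead_coeff p))"

definition mon_dvd :: "nat \<times> nat \<Rightarrow> nat \<times> nat \<Rightarrow> bool" where
  "mon_dvd m n \<longleftrightarrow> fst m \<le> fst n \<and> snd m \<le> snd n"

definition is_groebner_basis :: "bipoly set \<Rightarrow> bipoly set \<Rightarrow> bool" where
  "is_groebner_basis G I \<longleftrightarrow> finite G \<and> G \<subseteq> I \<and>
     (\<forall>f\<in>I. f \<noteq> 0 \<longrightarrow> (\<exists>g\<in>G. g \<noteq> 0 \<and> mon_dvd (lead_mon g) (lead_mon f)))"

definition monomials_quotient_basis :: "(nat \<times> nat) set \<Rightarrow> bipoly set \<Rightarrow> bool" where
  "monomials_quotient_basis M I \<longleftrightarrow>
     (\<forall>u. (\<Sum>(a,c)\<in>M. bmonom (u (a,c)) a c) \<in> I \<longrightarrow> (\<forall>m\<in>M. u m = 0)) \<and>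
     (\<forall>p. \<exists>u. p - (\<Sum>(a,c)\<in>M. bmonom (u (a,c)) a c) \<in> I)"

end

theory Submission
  imports Defs
begin


definition Dop :: "bipoly \<Rightarrow> bipoly" where
  "Dop h = pCons 0 h - smult [:0, 2:] (pderiv (pderiv h))"

definition Phi :: "bipoly \<Rightarrow> bipoly" where
  "Phi f = (\<Sum>i\<le>degree f. smult (coeff f i) ((Dop ^^ i) 1))"

lemma smult_sum_right: "smult a (\<Sum>x\<in>A. f x) = (\<Sum>x\<in>A. smult a (f x))"
  by (induction A rule: infinite_finite_induct) (auto simp: smult_add_right)

lemma Dop_0[simp]: "Dop 0 = 0" by (simp add: Dop_def)
lemma Dop_add: "Dop (x + y) = Dop x + Dop y"
  by (simp add: Dop_def pderiv_add smult_add_right algebra_simps)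
lemma Dop_smult: "Dop (smult a x) = smult a (Dop x)"
  by (simp add: Dop_def pderiv_smult smult_diff_right mult.commute)
lemma Dop_sum: "Dop (\<Sum>x\<in>A. f x) = (\<Sum>x\<in>A. Dop (f x))"
  by (induction A rule: infinite_finite_induct) (auto simp: Dop_add)

lemma Phi_eq: assumes "degree f < N" shows "Phi f = (\<Sum>i<N. smult (coeff f i) ((Dop ^^ i) 1))"
proof -
  have "{..degree f} \<subseteq> {..<N}" using assms by auto
  then show ?thesis unfolding Phi_def
    by (intro sum.mono_neutral_left) (auto simp: coeff_eq_0)
qed

lemma Phi_add: "Phi (f + h) = Phi f + Phi h"
proof -
  define N where "N = Suc (max (degree f) (degree h))"
  have "degree (f+h) < N" using degree_add_le_max[of f h] unfolding N_def by linarith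
  moreover have "degree f < N" "degree h < N" unfolding N_def by auto
  ultimately show ?thesis by (simp add: Phi_eq[of _ N] sum.distrib smult_add_left del: sum.lessThan_Suc)
qed

lemma Phi_0[simp]: "Phi 0 = 0" by (simp add: Phi_def)

lemma Phi_sum: "Phi (\<Sum>x\<in>A. f x) = (\<Sum>x\<in>A. Phi (f x))"
  by (induction A rule: infinite_finite_induct) (auto simp: Phi_add)

lemma Phi_smult: "Phi (smult a f) = smult a (Phi f)"
proof -
  have "degree (smult a f) < Suc (degree f)" using degree_smult_le[of a f] by linarith
  then show ?thesis by (simp add: Phi_eq[of _ "Suc (degree f)"] smult_sum_right del: sum.lessThan_Suc)
qed

lemma Phi_pCons0: "Phi (pCons 0 f) = Dop (Phi f)"
proof -
  have "degree (pCons 0 f) < Suc (Suc (degree f))" using degree_pCons_le[of 0 f] by linarith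
  then have "Phi (pCons 0 f) = (\<Sum>i<Suc (Suc (degree f)). smult (coeff (pCons 0 f) i) ((Dop ^^ i) 1))"
    by (rule Phi_eq)
  also have "\<dots> = (\<Sum>i<Suc (degree f). smult (coeff f i) ((Dop ^^ Suc i) 1))"
    by (subst sum.lessThan_Suc_shift) simp
  also have "\<dots> = Dop (Phi f)"
    by (simp add: Phi_eq[of f "Suc (degree f)"] Dop_sum Dop_smult del: sum.lessThan_Suc)
  finally show ?thesis .
qed

lemma Phi_const: "Phi [:a:] = [:a:]"
  by (simp add: Phi_def)

lemma pCons_split: "pCons a p = [:a:] + pCons 0 p" by simp

lemma Phi_pCons: "Phi (pCons a p) = [:a:] + Dop (Phi p)"
  by (subst pCons_split) (simp only: Phi_add Phi_const Phi_pCons0)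

definition V :: "nat \<Rightarrow> bipoly \<Rightarrow> bool" where
  "V g p \<longleftrightarrow> (\<forall>i. [:0, 1:] ^ ((g - i + 1) div 2) dvd coeff p i)"

lemma V_0[simp]: "V g 0" by (simp add: V_def)
lemma V_add: "V g x \<Longrightarrow> V g y \<Longrightarrow> V g (x + y)"
  by (simp add: V_def)
lemma V_smult: "V g x \<Longrightarrow> V g (smult a x)"
  by (simp add: V_def)
lemma V_sum: "(\<And>x. x \<in> A \<Longrightarrow> V g (f x)) \<Longrightarrow> V g (\<Sum>x\<in>A. f x)"
  by (induction A rule: infinite_finite_induct) (auto intro: V_add)

lemma pow_dvd_mono: "m \<le> n \<Longrightarrow> (x::'a::comm_semiring_1) ^ n dvd y \<Longrightarrow> x ^ m dvd y"
  using le_imp_power_dvd dvd_trans by blast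

lemma V_pCons0: assumes "V g x" shows "V g (pCons 0 x)"
  unfolding V_def
proof
  fix i show "[:0, 1:] ^ ((g - i + 1) div 2) dvd coeff (pCons 0 x) i"
  proof (cases i)
    case (Suc j)
    have "[:0, 1:] ^ ((g - j + 1) div 2) dvd coeff x j" using assms V_def by blast
    moreover have "(g - i + 1) div 2 \<le> (g - j + 1) div 2" using Suc by (intro div_le_mono) linarith
    ultimately show ?thesis using Suc pow_dvd_mono by auto
  qed simp
qed

lemma V_Dop: assumes "V g x" shows "V g (Dop x)"
proof -
  have "V g (smult [:0, 2:] (pderiv (pderiv x)))"
    unfolding V_def
  proof
    fix i
    have 1: "[:0, 1:] ^ ((g - (i+2) + 1) div 2) dvd coeff x (i+2)" using assms V_def by blast
    have 2: "(g - i + 1) div 2 \<le> Suc ((g - (i+2) + 1) div 2)" by linarith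
    have "[:0, 1:] ^ Suc ((g - (i+2) + 1) div 2) dvd [:0,1:] * coeff x (i+2)"
      using 1 by (metis power_Suc mult_dvd_mono dvd_refl)
    also have "\<dots> dvd [:0, 2:] * (of_nat (Suc i) * (of_nat (Suc (Suc i)) * coeff x (Suc (Suc i))))"
    proof -
      have h: "[:0, 2:] = [:0,1:] * [:2::complex:]" by simp
      have "[:0, 2:] * (of_nat (Suc i) * (of_nat (Suc (Suc i)) * coeff x (Suc (Suc i)))) = ([:0,1:] * coeff x (i+2)) * ([:2::complex:] * of_nat (Suc i) * of_nat (Suc (Suc i)))"
        by (subst h) (simp only: ac_simps add_2_eq_Suc')
      then show ?thesis by (metis dvd_triv_left)
    qed
    finally have calc: "[:0, 1:] ^ Suc ((g - (i+2) + 1) div 2) dvd [:0, 2:] * (of_nat (Suc i) * (of_nat (Suc (Suc i)) * coeff x (Suc (Suc i))))" .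
    have c: "coeff (smult [:0, 2:] (pderiv (pderiv x))) i = [:0, 2:] * (of_nat (Suc i) * (of_nat (Suc (Suc i)) * coeff x (Suc (Suc i))))"
      by (simp only: coeff_smult coeff_pderiv)
    show "[:0, 1:] ^ ((g - i + 1) div 2) dvd coeff (smult [:0, 2:] (pderiv (pderiv x))) i"
      unfolding c by (rule pow_dvd_mono[OF 2 calc])
  qed
  moreover have "V g (pCons 0 x)" using assms by (rule V_pCons0)
  ultimately show ?thesis unfolding Dop_def
    using V_add V_smult[of g _ "-1"] by (metis diff_conv_add_uminus smult_minus_left smult_1_left)
qed

lemma Phi_mult: assumes "V g (Phi f)" shows "V g (Phi (h * f))"
proof (induction h)
  case 0
  then show ?case by simp
next
  case (pCons a p)
  have "Phi (pCons a p * f) = smult a (Phi f) + Dop (Phi (p * f))"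
    by (simp add: Phi_add Phi_smult Phi_pCons0)
  then show ?case using pCons assms by (simp add: V_add V_smult V_Dop)
qed

lemma alpha_mult: "var_alpha * x = pCons 0 x"
  by (simp add: var_alpha_def)

lemma gamma_mult: "of_nat m * var_gamma * x = smult [:0, of_nat m:] x"
  by (simp add: var_gamma_def of_nat_poly)

lemma Phi_zeta: "Phi (zeta' k) = monom 1 k"
proof (induction k rule: zeta'.induct)
  case 1
  then show ?case by (simp add: Phi_def)
next
  case 2
  then show ?case by (simp add: var_alpha_def alpha_mult Phi_const Phi_pCons0 Dop_def monom_Suc)
next
  case 3
  then show ?case by (simp add: pderiv_pCons alpha_mult Phi_pCons0 Dop_def monom_Suc pderiv_monom)
next
  case (4 n)
  have z: "zeta' (Suc(Suc(Suc n))) = pCons 0 (zeta' (Suc (Suc n))) + smult [:0, of_nat (2*(n+2)*(n+1)):] (zeta' n)"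
    by (simp only: zeta'.simps alpha_mult gamma_mult)
  have "Phi (zeta' (Suc (Suc (Suc n)))) = Dop (monom 1 (Suc (Suc n))) + smult [:0, of_nat (2 * (n + 2) * (n + 1)):] (monom 1 n)"
    unfolding z using 4 by (simp only: Phi_pCons0 Phi_add Phi_smult)
  also have "\<dots> = monom 1 (Suc (Suc (Suc n)))"
  proof -
    have a: "pCons 0 (monom 1 (Suc (Suc n))) = (monom 1 (Suc (Suc (Suc n))) :: bipoly)"
      by (simp only: monom_Suc)
    have b: "smult [:0, 2:] (pderiv (pderiv (monom 1 (Suc (Suc n))))) = (smult [:0, of_nat (2 * (n + 2) * (n + 1)):] (monom 1 n) :: bipoly)"
      by (simp add: pderiv_monom smult_monom of_nat_poly algebra_simps)
    show ?thesis unfolding Dop_def a b by simp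
  qed
  finally show ?case .
qed

lemma Phi_coeff: "degree f < i + 3 \<Longrightarrow> coeff (Phi f) i = coeff f i"
proof (induction f arbitrary: i rule: pCons_induct)
  case 0
  then show ?case by simp
next
  case (pCons a p)
  have IH: "\<And>j. degree p < j + 3 \<Longrightarrow> coeff (Phi p) j = coeff p j" by fact
  have dP: "degree (Phi p) \<le> degree p"
    by (rule degree_le) (auto simp: IH coeff_eq_0)
  have z: "coeff (Phi p) (i+2) = 0"
  proof (cases "p = 0")
    case False
    then have "degree (pCons a p) = Suc (degree p)" by simp
    then have "degree (Phi p) < i + 2" using pCons.prems dP by linarith
    then show ?thesis by (simp add: coeff_eq_0)
  qed simp
  have "coeff (Phi (pCons a p)) i = coeff [:a:] i + coeff (pCons 0 (Phi p)) i - [:0,2:] * (of_nat (Suc i) * (of_nat (Suc (Suc i)) * coeff (Phi p) (Suc (Suc i))))"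
    by (simp only: Phi_pCons Dop_def coeff_add coeff_diff coeff_smult coeff_pderiv add_diff_eq)
  also have "\<dots> = coeff [:a:] i + coeff (pCons 0 (Phi p)) i" using z by simp
  also have "\<dots> = coeff (pCons a p) i"
  proof (cases i)
    case 0 then show ?thesis by simp
  next
    case (Suc j)
    have "coeff (Phi p) j = coeff p j"
    proof (cases "p = 0")
      case False
      then have "degree (pCons a p) = Suc (degree p)" by simp
      then show ?thesis using pCons.prems Suc by (intro IH) linarith
    qed simp
    then show ?thesis using Suc by simp
  qed
  finally show ?case .
qed

lemma Phi_degree_lc:
  assumes "f \<noteq> 0" shows "coeff (Phi f) (degree f) = lead_coeff f"
  by (rule Phi_coeff) simp

lemma gen_ideal_fin: "finite S \<Longrightarrow> gen_ideal S = {p. \<exists>r. p = (\<Sum>f\<in>S. r f * f)}"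
proof (intro set_eqI iffI)
  fix p assume fin: "finite S" and "p \<in> gen_ideal S"
  then obtain F r where F: "finite F" "F \<subseteq> S" "p = (\<Sum>f\<in>F. r f * f)"
    unfolding gen_ideal_def by blast
  define r' where "r' f = (if f \<in> F then r f else 0)" for f
  have "(\<Sum>f\<in>S. r' f * f) = (\<Sum>f\<in>F. r' f * f)"
    using F fin by (intro sum.mono_neutral_right) (auto simp: r'_def)
  also have "\<dots> = p" using F by (simp add: r'_def)
  finally show "p \<in> {p. \<exists>r. p = (\<Sum>f\<in>S. r f * f)}" by auto
next
  fix p assume "finite S" "p \<in> {p. \<exists>r. p = (\<Sum>f\<in>S. r f * f)}"
  then show "p \<in> gen_ideal S" unfolding gen_ideal_def by blast
qed

definition Gs :: "nat \<Rightarrow> bipoly set" where "Gs g = {zeta' g, zeta' (g + 1), zeta' (g + 2)}"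

lemma J_char: "J' g = {p. \<exists>r. p = (\<Sum>f\<in>Gs g. r f * f)}"
  unfolding J'_def Gs_def by (rule gen_ideal_fin) simp

lemma J_add: "x \<in> J' g \<Longrightarrow> y \<in> J' g \<Longrightarrow> x + y \<in> J' g"
proof -
  assume "x \<in> J' g" "y \<in> J' g"
  then obtain r1 r2 where "x = (\<Sum>f\<in>Gs g. r1 f * f)" "y = (\<Sum>f\<in>Gs g. r2 f * f)"
    unfolding J_char by blast
  then have "x + y = (\<Sum>f\<in>Gs g. (r1 f + r2 f) * f)" by (simp add: sum.distrib algebra_simps)
  then show ?thesis unfolding J_char by (intro CollectI exI[where x="\<lambda>f. r1 f + r2 f"])
qed

lemma J_mult: "x \<in> J' g \<Longrightarrow> h * x \<in> J' g"
proof -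
  assume "x \<in> J' g"
  then obtain r where "x = (\<Sum>f\<in>Gs g. r f * f)" unfolding J_char by blast
  then have "h * x = (\<Sum>f\<in>Gs g. (h * r f) * f)" by (simp add: sum_distrib_left algebra_simps)
  then show ?thesis unfolding J_char by (intro CollectI exI[where x="\<lambda>f. h * r f"])
qed

lemma J_0: "0 \<in> J' g" using J_mult[of _ g 0]
  unfolding J_char by (metis (mono_tags, lifting) mem_Collect_eq mult_zero_left sum.neutral)

lemma J_diff: "x \<in> J' g \<Longrightarrow> y \<in> J' g \<Longrightarrow> x - y \<in> J' g"
  using J_add[of x g "(-1) * y"] J_mult[of y g "-1"] by simp

lemma J_gen: "f \<in> Gs g \<Longrightarrow> f \<in> J' g"
proof -
  assume f: "f \<in> Gs g"
  have "(\<Sum>x\<in>Gs g. (if x = f then 1 else 0) * x) = (\<Sum>x\<in>Gs g. if x = f then x else 0)"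
    by (rule sum.cong) auto
  also have "\<dots> = f" using f by (simp add: Gs_def)
  finally have "f = (\<Sum>x\<in>Gs g. (if x = f then 1 else 0) * x)" ..
  then show ?thesis unfolding J_char by (intro CollectI exI[where x="\<lambda>x. if x = f then 1 else 0"])
qed

lemma J_Phi: assumes "f \<in> J' g" shows "V g (Phi f)"
proof -
  obtain r where r: "f = (\<Sum>x\<in>Gs g. r x * x)" using assms unfolding J_char by blast
  have "V g (Phi (r x * x))" if xG: "x \<in> Gs g" for x
  proof (rule Phi_mult)
    obtain k where "x = zeta' k" "g \<le> k" using xG unfolding Gs_def by (metis insertE singletonD le_add1 order_refl)
    then show "V g (Phi x)" by (auto simp: Phi_zeta V_def coeff_monom)
  qed
  then show ?thesis unfolding r Phi_sum by (rule V_sum)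
qed

lemma key: assumes "f \<in> J' g" "f \<noteq> 0" shows "g \<le> degree f + 2 * degree (lead_coeff f)"
proof -
  have "[:0, 1:] ^ ((g - degree f + 1) div 2) dvd coeff (Phi f) (degree f)"
    using J_Phi[OF assms(1)] V_def by blast
  then have "[:0, 1:] ^ ((g - degree f + 1) div 2) dvd lead_coeff f"
    using Phi_degree_lc[OF assms(2)] by simp
  then have "degree ([:0, 1::complex:] ^ ((g - degree f + 1) div 2)) \<le> degree (lead_coeff f)"
    using assms(2) by (intro dvd_imp_degree_le) auto
  then have "(g - degree f + 1) div 2 \<le> degree (lead_coeff f)"
    using degree_linear_power[of "0::complex"] by simp
  then show ?thesis by linarith
qed



lemma zeta_coeff: "coeff (zeta' k) k = 1 \<and> (\<forall>i>k. coeff (zeta' k) i = 0)"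
proof (induction k rule: zeta'.induct)
  case 1 then show ?case by simp
next
  case 2 then show ?case by (simp add: var_alpha_def coeff_pCons split: nat.splits)
next
  case 3 then show ?case by (simp add: alpha_mult coeff_pCons split: nat.splits)
next
  case (4 n)
  have z: "zeta' (Suc(Suc(Suc n))) = pCons 0 (zeta' (Suc (Suc n))) + smult [:0, of_nat (2*(n+2)*(n+1)):] (zeta' n)"
    by (simp only: zeta'.simps alpha_mult gamma_mult)
  show ?case unfolding z using 4 by (auto simp: coeff_pCons split: nat.splits)
qed

lemma zeta_degree[simp]: "degree (zeta' k) = k"
  using zeta_coeff[of k] by (metis degree_le le_antisym le_degree zero_neq_one)

lemma zeta_lc[simp]: "lead_coeff (zeta' k) = 1"
  using zeta_coeff[of k] by simp

lemma zeta_nz[simp]: "zeta' k \<noteq> 0"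
  using zeta_lc[of k] by (metis leading_coeff_0_iff zero_neq_one)

lemma zeta_step: "zeta' (Suc (Suc (Suc n))) - var_alpha * zeta' (Suc (Suc n)) = [:[:of_nat (2*(n+2)*(n+1)):]:] * (var_gamma * zeta' n)"
  by (simp only: zeta'.simps) (simp add: of_nat_poly)

lemma const_inv: "(c::complex) \<noteq> 0 \<Longrightarrow> [:[:1/c:]:] * [:[:c:]:] = (1::bipoly)"
  by (simp add: one_pCons[symmetric])

lemma J_unit: "x \<in> J' g \<Longrightarrow> (c::complex) \<noteq> 0 \<Longrightarrow> x = [:[:c:]:] * y \<Longrightarrow> y \<in> J' g"
proof -
  assume a: "x \<in> J' g" "c \<noteq> 0" "x = [:[:c:]:] * y"
  have "[:[:1/c:]:] * x = ([:[:1/c:]:] * [:[:c:]:]) * y" unfolding a(3) by (rule mult.assoc[symmetric])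
  also have "\<dots> = y" using const_inv[OF a(2)] by simp
  finally show ?thesis using J_mult[OF a(1)] by metis
qed

lemma J_step:
  assumes "var_gamma ^ i * zeta' (Suc (Suc (Suc n))) \<in> J' g" "var_gamma ^ i * zeta' (Suc (Suc n)) \<in> J' g"
  shows "var_gamma ^ Suc i * zeta' n \<in> J' g"
proof -
  have k0: "(of_nat (2*(n+2)*(n+1)) :: complex) \<noteq> 0" by (simp only: of_nat_eq_0_iff) simp
  have m: "var_gamma ^ i * zeta' (Suc (Suc (Suc n))) - var_alpha * (var_gamma ^ i * zeta' (Suc (Suc n))) \<in> J' g"
    by (rule J_diff[OF assms(1) J_mult[OF assms(2)]])
  have "var_gamma ^ i * zeta' (Suc (Suc (Suc n))) - var_alpha * (var_gamma ^ i * zeta' (Suc (Suc n)))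
      = var_gamma ^ i * (zeta' (Suc (Suc (Suc n))) - var_alpha * zeta' (Suc (Suc n)))"
    by (simp only: right_diff_distrib mult.left_commute)
  also have "\<dots> = var_gamma ^ i * ([:[:of_nat (2*(n+2)*(n+1)):]:] * (var_gamma * zeta' n))"
    unfolding zeta_step ..
  also have "\<dots> = [:[:of_nat (2*(n+2)*(n+1)):]:] * (var_gamma ^ Suc i * zeta' n)"
    by (simp only: power_Suc mult.assoc mult.left_commute)
  finally show ?thesis using J_unit[OF m k0] by blast
qed

lemma memb: "i \<le> g div 2 \<Longrightarrow> var_gamma ^ i * zeta' (g - 2*i) \<in> J' g \<and> var_gamma ^ i * zeta' (g - 2*i + 1) \<in> J' g \<and> var_gamma ^ i * zeta' (g - 2*i + 2) \<in> J' g"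
proof (induction i)
  case 0
  have "zeta' g \<in> J' g" by (rule J_gen) (unfold Gs_def, rule insertI1)
  moreover have "zeta' (g + 1) \<in> J' g" by (rule J_gen) (unfold Gs_def, rule insertI2, rule insertI1)
  moreover have "zeta' (g + 2) \<in> J' g" by (rule J_gen) (unfold Gs_def, rule insertI2, rule insertI2, rule insertI1)
  ultimately show ?case by (simp only: power_0 mult_1 diff_zero mult_0_right)
next
  case (Suc i)
  have ile: "i \<le> g div 2" using Suc.prems by simp
  have IH0: "var_gamma ^ i * zeta' (g - 2*i) \<in> J' g \<and> var_gamma ^ i * zeta' (g - 2*i + 1) \<in> J' g \<and> var_gamma ^ i * zeta' (g - 2*i + 2) \<in> J' g"
    by (rule Suc.IH[OF ile])
  have IH: "var_gamma ^ i * zeta' (g - 2*i) \<in> J' g" "var_gamma ^ i * zeta' (g - 2*i + 1) \<in> J' g" "var_gamma ^ i * zeta' (g - 2*i + 2) \<in> J' g"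
    using IH0 by simp_all
  have "2 * Suc i \<le> g" using Suc.prems by presburger
  then obtain n where gn: "g = 2 * Suc i + n" using le_Suc_ex by blast
  have e1: "g - 2*i = Suc (Suc n)" using gn by simp
  have e2: "g - 2*i + 1 = Suc (Suc (Suc n))" using gn by simp
  have e3: "g - 2*i + 2 = Suc (Suc (Suc (Suc n)))" using gn by simp
  have e4: "g - 2 * Suc i = n" using gn by simp
  have e5: "g - 2 * Suc i + 1 = Suc n" using gn by simp
  have e6: "g - 2 * Suc i + 2 = Suc (Suc n)" using gn by simp
  have A: "var_gamma ^ i * zeta' (Suc (Suc n)) \<in> J' g" using IH(1) unfolding e1 .
  have B: "var_gamma ^ i * zeta' (Suc (Suc (Suc n))) \<in> J' g" using IH(2) unfolding e2 .
  have C: "var_gamma ^ i * zeta' (Suc (Suc (Suc (Suc n)))) \<in> J' g" using IH(3) unfolding e3 .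
  have 1: "var_gamma ^ Suc i * zeta' n \<in> J' g" by (rule J_step[OF B A])
  have 2: "var_gamma ^ Suc i * zeta' (Suc n) \<in> J' g" by (rule J_step[OF C B])
  have "var_gamma * (var_gamma ^ i * zeta' (Suc (Suc n))) \<in> J' g" by (rule J_mult[OF A])
  then have 3: "var_gamma ^ Suc i * zeta' (Suc (Suc n)) \<in> J' g" by (simp only: power_Suc mult.assoc)
  show ?case unfolding e4 e5 e6 using 1 2 3 by simp
qed

lemma memb_last: "var_gamma ^ ((g + 1) div 2) \<in> J' g"
proof (cases "even g")
  case True
  then have "(g + 1) div 2 = g div 2" "g - 2 * (g div 2) = 0" by auto
  then show ?thesis using memb[of "g div 2" g] by simp
next
  case False
  obtain m where gm: "g = 2 * m + 1" using False oddE by blast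
  have e: "(g + 1) div 2 = Suc m" "g - 2*m + 1 = Suc (Suc 0)" "g - 2*m + 2 = Suc (Suc (Suc 0))" "m \<le> g div 2"
    using gm by auto
  have "var_gamma ^ Suc m * zeta' 0 \<in> J' g"
    using memb[OF e(4)] e by (intro J_step) auto
  then show ?thesis using e by simp
qed


lemma vg_pow: "var_gamma ^ j = [:monom 1 j:]"
proof (induction j)
  case 0 then show ?case by (simp add: one_pCons)
next
  case (Suc j)
  have "[:0, 1:] * monom (1::complex) j = monom 1 (Suc j)"
    by (simp add: monom_Suc)
  then show ?case using Suc by (simp add: var_gamma_def)
qed

lemma zeta_ck[simp]: "coeff (zeta' k) k = 1" using zeta_coeff by blast

lemma monom_1_lc: "monom (1::complex) j \<noteq> 0" by simp

lemma lead_mon_gz: "lead_mon (var_gamma ^ i * zeta' k) = (k, i) \<and> var_gamma ^ i * zeta' k \<noteq> 0"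
proof -
  have e: "var_gamma ^ i * zeta' k = smult (monom 1 i) (zeta' k)" by (simp add: vg_pow)
  show ?thesis unfolding e lead_mon_def by (simp add: degree_monom_eq)
qed

lemma lead_mon_g: "lead_mon (var_gamma ^ i) = (0, i) \<and> var_gamma ^ i \<noteq> 0"
  by (simp add: vg_pow lead_mon_def degree_monom_eq)

lemma groebner: "is_groebner_basis
           ({var_gamma ^ i * zeta' (g - 2 * i) | i. i \<le> g div 2} \<union> {var_gamma ^ ((g + 1) div 2)})
           (J' g)"
  unfolding is_groebner_basis_def
proof (intro conjI ballI impI)
  show "finite ({var_gamma ^ i * zeta' (g - 2 * i) | i. i \<le> g div 2} \<union> {var_gamma ^ ((g + 1) div 2)})"
    by (simp add: finite_image_set)
  show "{var_gamma ^ i * zeta' (g - 2 * i) | i. i \<le> g div 2} \<union> {var_gamma ^ ((g + 1) div 2)} \<subseteq> J' g"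
    using memb[of _ g] memb_last[of g] by blast
  fix f assume f: "f \<in> J' g" "f \<noteq> 0"
  have k: "g \<le> degree f + 2 * degree (lead_coeff f)" by (rule key[OF f])
  show "\<exists>h\<in>{var_gamma ^ i * zeta' (g - 2 * i) | i. i \<le> g div 2} \<union> {var_gamma ^ ((g + 1) div 2)}.
            h \<noteq> 0 \<and> mon_dvd (lead_mon h) (lead_mon f)"
  proof (cases "degree (lead_coeff f) \<le> g div 2")
    case True
    let ?c = "degree (lead_coeff f)"
    have "var_gamma ^ ?c * zeta' (g - 2 * ?c) \<in> {var_gamma ^ i * zeta' (g - 2 * i) | i. i \<le> g div 2}"
      using True by blast
    moreover have "mon_dvd (lead_mon (var_gamma ^ ?c * zeta' (g - 2 * ?c))) (lead_mon f)"
      using conjunct1[OF lead_mon_gz[of ?c "g - 2 * ?c"]] k unfolding mon_dvd_def lead_mon_def[of f] by simp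
    ultimately show ?thesis using lead_mon_gz by blast
  next
    case False
    have "mon_dvd (lead_mon (var_gamma ^ ((g + 1) div 2))) (lead_mon f)"
      using conjunct1[OF lead_mon_g[of "(g + 1) div 2"]] False unfolding mon_dvd_def lead_mon_def[of f] by simp
    then show ?thesis using lead_mon_g by blast
  qed
qed

definition M0 :: "nat \<Rightarrow> (nat \<times> nat) set" where "M0 g = {(a, c). a + 2 * c < g}"

lemma M0_finite: "finite (M0 g)"
proof -
  have "M0 g \<subseteq> {..<g} \<times> {..<g}" unfolding M0_def by auto
  then show ?thesis by (rule finite_subset) auto
qed

lemma M_eq: "(if even g then {(a, c). 2 * c < g \<and> a < g - 2 * c}
            else {(a, c). 2 * c \<le> g - 1 \<and> a < g - 2 * c}) = M0 g"
  unfolding M0_def by (auto elim: oddE)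

definition Ssum :: "nat \<Rightarrow> (nat \<times> nat \<Rightarrow> complex) \<Rightarrow> bipoly" where
  "Ssum g u = (\<Sum>(a,c)\<in>M0 g. bmonom (u (a,c)) a c)"

lemma coeff_Ssum: "coeff (coeff (Ssum g u) a) c = (if (a, c) \<in> M0 g then u (a, c) else 0)"
proof -
  have "coeff (coeff (Ssum g u) a) c = (\<Sum>x\<in>M0 g. if x = (a, c) then u x else 0)"
    unfolding Ssum_def bmonom_def coeff_sum
    by (intro sum.cong) (auto simp: coeff_monom split: if_splits)
  also have "\<dots> = (if (a, c) \<in> M0 g then u (a, c) else 0)"
    using M0_finite[of g] by (simp add: sum.delta')
  finally show ?thesis .
qed

lemma indep: assumes "Ssum g u \<in> J' g" shows "\<forall>m\<in>M0 g. u m = 0"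
proof (rule ccontr)
  assume "\<not> (\<forall>m\<in>M0 g. u m = 0)"
  then obtain a0 c0 where m: "(a0, c0) \<in> M0 g" "u (a0, c0) \<noteq> 0" by auto
  let ?r = "Ssum g u"
  have "coeff (coeff ?r a0) c0 \<noteq> 0" using m by (simp add: coeff_Ssum)
  then have r0: "?r \<noteq> 0" by auto
  have k: "g \<le> degree ?r + 2 * degree (lead_coeff ?r)" by (rule key[OF assms r0])
  have "lead_coeff ?r \<noteq> 0" using r0 by simp
  then have "coeff (lead_coeff ?r) (degree (lead_coeff ?r)) \<noteq> 0" by simp
  then have "(degree ?r, degree (lead_coeff ?r)) \<in> M0 g"
    using coeff_Ssum[of g u "degree ?r" "degree (lead_coeff ?r)"] by (auto split: if_splits)
  then show False using k unfolding M0_def by simp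
qed

definition Q :: "nat \<Rightarrow> bipoly \<Rightarrow> bool" where "Q g p \<longleftrightarrow> (\<exists>u. p - Ssum g u \<in> J' g)"

lemma Ssum_add: "Ssum g (\<lambda>m. u m + v m) = Ssum g u + Ssum g v"
  unfolding Ssum_def bmonom_def
  by (simp add: sum.distrib[symmetric] split_beta add_monom[symmetric])

lemma Ssum_scale: "Ssum g (\<lambda>m. k * u m) = smult [:k:] (Ssum g u)"
  unfolding Ssum_def bmonom_def
  by (simp add: smult_sum_right split_beta smult_monom)

lemma Ssum_zero: "Ssum g (\<lambda>m. 0) = 0"
  unfolding Ssum_def bmonom_def by simp

lemma Ssum_ind: assumes "m \<in> M0 g" shows "Ssum g (\<lambda>x. if x = m then 1 else 0) = bmonom 1 (fst m) (snd m)"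
proof -
  have "Ssum g (\<lambda>x. if x = m then 1 else 0) = (\<Sum>x\<in>M0 g. if x = m then bmonom 1 (fst m) (snd m) else 0)"
    unfolding Ssum_def bmonom_def by (intro sum.cong) auto
  also have "\<dots> = bmonom 1 (fst m) (snd m)" using assms M0_finite[of g] by (simp add: sum.delta')
  finally show ?thesis .
qed

lemma Q_J: "p \<in> J' g \<Longrightarrow> Q g p"
  unfolding Q_def using Ssum_zero[of g] by (metis diff_zero)

lemma Q_add: "Q g p \<Longrightarrow> Q g q \<Longrightarrow> Q g (p + q)"
proof -
  assume "Q g p" "Q g q"
  then obtain u v where "p - Ssum g u \<in> J' g" "q - Ssum g v \<in> J' g" unfolding Q_def by blast
  then have "(p + q) - Ssum g (\<lambda>m. u m + v m) \<in> J' g"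
    using J_add unfolding Ssum_add by (metis add_diff_add)
  then show ?thesis unfolding Q_def by blast
qed

lemma Q_smult: "Q g p \<Longrightarrow> Q g (smult [:k:] p)"
proof -
  assume "Q g p"
  then obtain u where u: "p - Ssum g u \<in> J' g" unfolding Q_def by blast
  have "smult [:k:] p - Ssum g (\<lambda>m. k * u m) = [:[:k:]:] * (p - Ssum g u)"
    unfolding Ssum_scale by (simp add: smult_diff_right)
  then have "smult [:k:] p - Ssum g (\<lambda>m. k * u m) \<in> J' g" using J_mult[OF u, of "[:[:k:]:]"] by simp
  then show ?thesis unfolding Q_def by blast
qed

lemma Q_sum: "(\<And>x. x \<in> A \<Longrightarrow> Q g (f x)) \<Longrightarrow> Q g (\<Sum>x\<in>A. f x)"
  by (induction A rule: infinite_finite_induct) (auto intro: Q_add Q_J J_0)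

lemma bmonom_eq: "bmonom 1 a c = monom 1 a * var_gamma ^ c"
  by (simp add: bmonom_def vg_pow smult_monom mult.commute)

lemma Q_bmonom1:
  assumes IH: "\<And>q. degree q < a \<Longrightarrow> Q g q"
  shows "Q g (bmonom 1 a c)"
proof (cases "(a, c) \<in> M0 g")
  case True
  have "bmonom 1 a c - Ssum g (\<lambda>x. if x = (a, c) then 1 else 0) = 0"
    using Ssum_ind[OF True] by simp
  then show ?thesis unfolding Q_def using J_0 by metis
next
  case False
  show ?thesis
  proof (cases "(g + 1) div 2 \<le> c")
    case True
    have "bmonom 1 a c = (monom 1 a * var_gamma ^ (c - (g + 1) div 2)) * var_gamma ^ ((g + 1) div 2)"
      unfolding bmonom_eq using True by (simp add: mult.assoc power_add[symmetric])
    then have "bmonom 1 a c \<in> J' g" using J_mult[OF memb_last] by metis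
    then show ?thesis by (rule Q_J)
  next
    case c: False
    then have cle: "c \<le> g div 2" by linarith
    have kle: "g - 2 * c \<le> a" using False unfolding M0_def by auto
    let ?k = "g - 2 * c"
    let ?q = "monom 1 (a - ?k) * (var_gamma ^ c * zeta' ?k)"
    have qJ: "?q \<in> J' g" using memb[OF cle] J_mult by blast
    have gz: "var_gamma ^ c * zeta' ?k \<noteq> 0" "degree (var_gamma ^ c * zeta' ?k) = ?k"
      "lead_coeff (var_gamma ^ c * zeta' ?k) = monom 1 c"
      using lead_mon_gz[of c ?k] by (auto simp: lead_mon_def vg_pow)
    have dq: "degree ?q = a" using gz kle by (simp add: degree_mult_eq degree_monom_eq)
    have lq: "lead_coeff ?q = monom 1 c" using gz by (simp add: lead_coeff_mult degree_monom_eq)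
    let ?d = "bmonom 1 a c - ?q"
    have dd: "degree ?d \<le> a" using dq by (intro degree_diff_le) (auto simp: bmonom_def degree_monom_le)
    have cd: "coeff ?d a = 0" using lq dq by (simp add: bmonom_def)
    have "Q g ?d"
    proof (cases "?d = 0")
      case True then show ?thesis using Q_J J_0 by simp
    next
      case False
      then have "degree ?d \<noteq> a" using cd by (metis leading_coeff_0_iff)
      then show ?thesis using dd IH by simp
    qed
    then have "Q g (?d + ?q)" using Q_add Q_J[OF qJ] by blast
    then show ?thesis by simp
  qed
qed

lemma Q_all: "Q g p"
proof (induction "degree p" arbitrary: p rule: less_induct)
  case less
  let ?a = "degree p" and ?h = "lead_coeff p"
  have IH: "\<And>q. degree q < ?a \<Longrightarrow> Q g q" using less by blast
  let ?r = "p - monom ?h ?a"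
  have Qr: "Q g ?r"
  proof (cases "?r = 0")
    case True then show ?thesis using Q_J J_0 by simp
  next
    case False
    have "degree ?r \<le> ?a" by (intro degree_diff_le) (auto simp: degree_monom_le)
    moreover have "coeff ?r ?a = 0" by simp
    then have "degree ?r \<noteq> ?a" using False by (metis leading_coeff_0_iff)
    ultimately show ?thesis using IH by simp
  qed
  have "monom ?h ?a = (\<Sum>c\<le>degree ?h. smult [:coeff ?h c:] (bmonom 1 ?a c))"
  proof -
    have "monom ?h ?a = monom (\<Sum>c\<le>degree ?h. monom (coeff ?h c) c) ?a"
      by (simp add: poly_as_sum_of_monoms)
    also have "\<dots> = (\<Sum>c\<le>degree ?h. smult [:coeff ?h c:] (bmonom 1 ?a c))"
      unfolding monom_sum bmonom_def by (intro sum.cong) (auto simp: smult_monom)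
    finally show ?thesis .
  qed
  moreover have "Q g (bmonom 1 ?a c)" for c by (rule Q_bmonom1[OF IH])
  ultimately have "Q g (monom ?h ?a)" by (metis (no_types, lifting) Q_sum Q_smult)
  then have "Q g (?r + monom ?h ?a)" using Qr by (intro Q_add)
  then show ?case by simp
qed

theorem proposition5p15:
  fixes g :: nat
  shows "is_groebner_basis
           ({var_gamma ^ i * zeta' (g - 2 * i) | i. i \<le> g div 2} \<union> {var_gamma ^ ((g + 1) div 2)})
           (J' g)
       \<and> monomials_quotient_basis
           (if even g then {(a, c). 2 * c < g \<and> a < g - 2 * c}
            else {(a, c). 2 * c \<le> g - 1 \<and> a < g - 2 * c})
           (J' g)"
proof
  show "is_groebner_basis
           ({var_gamma ^ i * zeta' (g - 2 * i) | i. i \<le> g div 2} \<union> {var_gamma ^ ((g + 1) div 2)})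
           (J' g)" by (rule groebner)
  show "monomials_quotient_basis
           (if even g then {(a, c). 2 * c < g \<and> a < g - 2 * c}
            else {(a, c). 2 * c \<le> g - 1 \<and> a < g - 2 * c})
           (J' g)"
    unfolding M_eq monomials_quotient_basis_def
    using indep[of g] Q_all[of g] unfolding Ssum_def Q_def by blast
qed

end
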